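(* Let $\mathcal{M}\subseteq \mathcal{L}_n^+$ be a linear Markov model. Then $\mathcal{M}=\operatorname{span}_{\mathbb{R}}(\mathcal{M})\cap \mathcal{L}_n^+$, and the following are equivalent: (1) $\mathcal{M}$ is uniformization stable; (2) $\operatorname{span}_{\mathbb{R}}(\mathcal{M})$ is a Jordan algebra, i.e. $AB+BA\in \operatorname{span}_{\mathbb{R}}(\mathcal{M})$ for all $A,B\in \operatorname{span}_{\mathbb{R}}(\mathcal{M})$.
   Context: Let $n\ge 1$, let $\mathbf{1}\in\mathbb{R}^n$ be the all-ones column vector and $I_n$ the identity matrix. Let $\mathcal{L}_n=\{Q\in \mathrm{Mat}_n(\mathbb{R}): Q\mathbf{1}=0\}$ be the zero row sum matrices. A rate matrix is a $Q\in\mathcal{L}_n$ whose off-diagonal entries are all nonnegative; $\mathcal{L}_n^+$ denotes the set of rate matrices. A Markov model is any subset $\mathcal{M}\subseteq\mathcal{L}_n^+$; it is linear if $\mathcal{M}=\mathcal{L}\cap\mathcal{L}_n^+$ for some linear subspace $\mathcal{L}\subseteq\mathcal{L}_n$. A Markov model $\mathcal{M}$ is uniformization stable if for every $Q\in\mathcal{M}$ and every $t\ge 0$ there exists $\hat Q\in\mathcal{M}$ with $e^{Qt}-I_n=\hat Q$. A linear subspace of $\mathrm{Mat}_n(\mathbb{R})$ is a (matrix) Jordan algebra if it is closed under the product $A\odot B:=AB+BA$. *)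

theory Defs
  imports "HOL-Analysis.Analysis"
begin

text \<open>n x n real matrices are rendered as real^'n^'n, with n = CARD('n) arbitrary.\<close>

definition zero_row_sum :: "(real^'n^'n) set" where
  "zero_row_sum = {Q. Q *v (\<chi> i. 1) = 0}"

definition rate_matrices :: "(real^'n^'n) set" where
  "rate_matrices = {Q. Q \<in> zero_row_sum \<and> (\<forall>i j. i \<noteq> j \<longrightarrow> 0 \<le> Q $ i $ j)}"

definition linear_markov_model :: "(real^'n^'n) set \<Rightarrow> bool" where
  "linear_markov_model M \<longleftrightarrow>
     (\<exists>L. subspace L \<and> L \<subseteq> zero_row_sum \<and> M = L \<inter> rate_matrices)"

primrec matpow :: "real^'n^'n \<Rightarrow> nat \<Rightarrow> real^'n^'n" where
  "matpow A 0 = mat 1"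
| "matpow A (Suc k) = matpow A k ** A"

definition mexp :: "real^'n^'n \<Rightarrow> real^'n^'n" where
  "mexp A = (\<Sum>k. (1 / fact k) *\<^sub>R matpow A k)"

definition uniformization_stable :: "(real^'n^'n) set \<Rightarrow> bool" where
  "uniformization_stable M \<longleftrightarrow>
     (\<forall>Q\<in>M. \<forall>t::real. t \<ge> 0 \<longrightarrow> (\<exists>Qh\<in>M. mexp (t *\<^sub>R Q) - mat 1 = Qh))"

definition jordan_algebra :: "(real^'n^'n) set \<Rightarrow> bool" where
  "jordan_algebra S \<longleftrightarrow> subspace S \<and> (\<forall>A\<in>S. \<forall>B\<in>S. A ** B + B ** A \<in> S)"

end

theory Submission
  imports Defs
begin


definition l1 :: "real^'n^'n \<Rightarrow> real" where
  "l1 A = (\<Sum>i\<in>UNIV. \<Sum>j\<in>UNIV. \<bar>A$i$j\<bar>)"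

lemma l1_nonneg: "0 \<le> l1 A"
  unfolding l1_def by (intro sum_nonneg) auto

lemma norm_le_l1: "norm A \<le> l1 A"
proof -
  have "norm A \<le> (\<Sum>i\<in>UNIV. norm (A$i))" by (simp add: norm_vec_def L2_set_le_sum)
  also have "\<dots> \<le> (\<Sum>i\<in>UNIV. \<Sum>j\<in>UNIV. \<bar>A$i$j\<bar>)"
    by (intro sum_mono norm_le_l1_cart)
  finally show ?thesis unfolding l1_def .
qed

lemma entry_le_l1: "\<bar>A$i$j\<bar> \<le> l1 A"
proof -
  have "\<bar>A$i$j\<bar> \<le> norm (A$i)" by (rule component_le_norm_cart)
  also have "\<dots> \<le> norm A" by (rule Finite_Cartesian_Product.norm_nth_le)
  also have "\<dots> \<le> l1 A" by (rule norm_le_l1)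
  finally show ?thesis .
qed

lemma row_le_l1: "(\<Sum>j\<in>UNIV. \<bar>B$k$j\<bar>) \<le> l1 B"
  unfolding l1_def by (rule member_le_sum[where f="\<lambda>k. \<Sum>j\<in>UNIV. \<bar>B$k$j\<bar>"]) (auto intro: sum_nonneg)

lemma l1_mult: "l1 (A ** B) \<le> l1 A * l1 B"
proof -
  have "l1 (A ** B) = (\<Sum>i\<in>UNIV. \<Sum>j\<in>UNIV. \<bar>\<Sum>k\<in>UNIV. A$i$k * B$k$j\<bar>)"
    unfolding l1_def matrix_matrix_mult_def by simp
  also have "\<dots> \<le> (\<Sum>i\<in>UNIV. \<Sum>j\<in>UNIV. \<Sum>k\<in>UNIV. \<bar>A$i$k\<bar> * \<bar>B$k$j\<bar>)"
    by (intro sum_mono order_trans[OF sum_abs]) (simp add: abs_mult)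
  also have "\<dots> = (\<Sum>i\<in>UNIV. \<Sum>k\<in>UNIV. \<bar>A$i$k\<bar> * (\<Sum>j\<in>UNIV. \<bar>B$k$j\<bar>))"
    by (rule sum.cong[OF refl], subst sum.swap, simp add: sum_distrib_left)
  also have "\<dots> \<le> (\<Sum>i\<in>UNIV. \<Sum>k\<in>UNIV. \<bar>A$i$k\<bar> * l1 B)"
    by (intro sum_mono mult_left_mono row_le_l1) auto
  also have "\<dots> = l1 A * l1 B"
    unfolding l1_def by (simp add: sum_distrib_right)
  finally show ?thesis .
qed

lemma matrix_add_rdistrib': "((B + C) ** A) = (B ** A) + (C ** A)"
  for A B C :: "real^'n^'n"
  by (vector matrix_matrix_mult_def sum.distrib[symmetric] field_simps)

lemma matrix_diff_rdistrib': "((B - C) ** A) = (B ** A) - (C ** A)"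
  for A B C :: "real^'n^'n"
  by (vector matrix_matrix_mult_def sum_subtractf[symmetric] field_simps)

lemma matrix_diff_ldistrib': "(A ** (B - C)) = (A ** B) - (A ** C)"
  for A B C :: "real^'n^'n"
  by (vector matrix_matrix_mult_def sum_subtractf[symmetric] field_simps)

lemma scaleR_mm_left: "(k *\<^sub>R A) ** B = k *\<^sub>R (A ** B)" for A B :: "real^'n^'n"
  by (simp add: scalar_matrix_assoc)

lemma scaleR_mm_right: "A ** (k *\<^sub>R B) = k *\<^sub>R (A ** B)" for A B :: "real^'n^'n"
  by (simp add: matrix_scalar_ac scalar_matrix_assoc)

lemma matpow_scale: "matpow (t *\<^sub>R A) k = (t^k) *\<^sub>R matpow A k"
  by (induction k) (simp_all add: scaleR_mm_left scaleR_mm_right)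

lemma matpow_comm: "matpow A k ** A = A ** matpow A k"
  by (induction k) (simp_all add: matrix_mul_assoc[symmetric])

lemma l1_matpow: "l1 (matpow A k) \<le> l1 (mat 1 :: real^'n^'n) * l1 A ^ k"
  for A :: "real^'n^'n"
proof (induction k)
  case 0 then show ?case by simp
next
  case (Suc k)
  have "l1 (matpow A (Suc k)) \<le> l1 (matpow A k) * l1 A" by (simp add: l1_mult)
  also have "\<dots> \<le> l1 (mat 1 :: real^'n^'n) * l1 A ^ k * l1 A"
    using Suc l1_nonneg[of A] by (intro mult_right_mono) auto
  finally show ?case by (simp add: mult_ac)
qed

definition E :: "real^'n^'n \<Rightarrow> real \<Rightarrow> nat \<Rightarrow> real^'n^'n" where
  "E A t k = (t^k / fact k) *\<^sub>R matpow A k"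

lemma norm_E: "norm (E A t k) \<le> l1 (mat 1 :: real^'n^'n) * ((\<bar>t\<bar> * l1 A)^k / fact k)"
  for A :: "real^'n^'n"
proof -
  have "norm (E A t k) = (\<bar>t\<bar>^k / fact k) * norm (matpow A k)"
    by (simp add: E_def power_abs)
  also have "\<dots> \<le> (\<bar>t\<bar>^k / fact k) * (l1 (mat 1 :: real^'n^'n) * l1 A ^ k)"
    by (intro mult_left_mono order_trans[OF norm_le_l1 l1_matpow]) auto
  finally show ?thesis by (simp add: power_mult_distrib field_simps)
qed

lemma summable_expc: "summable (\<lambda>k. c * (x^k / fact k))" for x c :: real
  using summable_exp[of x] by (intro summable_mult) (simp add: field_simps)

lemma summable_norm_E: "summable (\<lambda>k. norm (E A t k))" for A :: "real^'n^'n"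
  by (rule summable_comparison_test[OF _ summable_expc[of "l1 (mat 1 :: real^'n^'n)" "\<bar>t\<bar> * l1 A"]])
    (rule exI[of _ 0], intro allI impI, simp only: real_norm_def abs_norm_cancel, rule norm_E)

lemma summable_E: "summable (E A t)"
  using summable_norm_E summable_norm_cancel by blast

lemma mexp_E: "mexp (t *\<^sub>R A) = suminf (E A t)"
  unfolding mexp_def E_def matpow_scale by simp

lemma suminf_in_closed_subspace:
  fixes f :: "nat \<Rightarrow> real^'n^'n"
  assumes "closed S" "subspace S" "summable f" "\<And>n. f n \<in> S"
  shows "suminf f \<in> S"
proof (rule Lim_in_closed_set[OF assms(1) _ trivial_limit_sequentially summable_LIMSEQ[OF assms(3)]])
  show "\<forall>\<^sub>F n in sequentially. (\<Sum>i<n. f i) \<in> S"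
    using assms(2,4) by (intro always_eventually allI subspace_sum) auto
qed

lemma E_small: "(\<Sum>i<3. E Q t i) = mat 1 + t *\<^sub>R Q + (t^2/2) *\<^sub>R (Q ** Q)"
  by (simp add: E_def eval_nat_numeral)

lemma sq_in:
  fixes Q :: "real^'n^'n"
  assumes S: "closed S" "subspace S" and QS: "Q \<in> S"
    and ex: "\<And>t. t > 0 \<Longrightarrow> mexp (t *\<^sub>R Q) - mat 1 \<in> S"
  shows "Q ** Q \<in> S"
proof -
  define c where "c = l1 (mat 1 :: real^'n^'n)"
  define a where "a = l1 Q"
  define B where "B k = c * (a^k / fact k)" for k
  define K where "K = (\<Sum>k. B (k+3))"
  have sB: "summable (\<lambda>k. B (k+3))"
    unfolding B_def using summable_expc[of c a] summable_iff_shift[of "\<lambda>k. c * (a^k / fact k)" 3] by simp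
  define T where "T t = (\<Sum>k. E Q t (k+3))" for t
  define g where "g t = (2/t^2) *\<^sub>R (mexp (t *\<^sub>R Q) - mat 1 - t *\<^sub>R Q)" for t
  have decomp: "mexp (t *\<^sub>R Q) = T t + (mat 1 + t *\<^sub>R Q + (t^2/2) *\<^sub>R (Q ** Q))" for t
    unfolding mexp_E T_def E_small[symmetric] by (rule suminf_split_initial_segment[OF summable_E])
  have normT: "norm (T t) \<le> t^3 * K" if t: "0 < t" "t \<le> 1" for t
  proof -
    have s1: "summable (\<lambda>k. norm (E Q t (k+3)))"
      using summable_norm_E[of Q t] summable_iff_shift[of "\<lambda>k. norm (E Q t k)" 3] by simp
    have le: "norm (E Q t (k+3)) \<le> t^3 * B (k+3)" for k
    proof -
      have "norm (E Q t (k+3)) \<le> c * ((\<bar>t\<bar> * a)^(k+3) / fact (k+3))"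
        unfolding c_def a_def by (rule norm_E)
      also have "\<dots> = t^(k+3) * B (k+3)" using t by (simp add: B_def power_mult_distrib)
      also have "\<dots> \<le> t^3 * B (k+3)"
      proof (rule mult_right_mono)
        show "t^(k+3) \<le> t^3" using t by (intro power_decreasing) auto
        show "0 \<le> B (k+3)" unfolding B_def c_def a_def by (intro mult_nonneg_nonneg divide_nonneg_pos zero_le_power l1_nonneg) auto
      qed
      finally show ?thesis .
    qed
    have "norm (T t) \<le> (\<Sum>k. norm (E Q t (k+3)))" unfolding T_def by (rule summable_norm[OF s1])
    also have "\<dots> \<le> (\<Sum>k. t^3 * B (k+3))"
      by (rule suminf_le[OF le s1 summable_mult[OF sB]])
    also have "\<dots> = t^3 * K" unfolding K_def by (rule suminf_mult[OF sB])
    finally show ?thesis .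
  qed
  have gS: "g t \<in> S" if "t > 0" for t
    unfolding g_def
    by (rule subspace_scale[OF S(2)], rule subspace_diff[OF S(2) ex[OF that]], rule subspace_scale[OF S(2) QS])
  have geq: "g t - Q ** Q = (2/t^2) *\<^sub>R T t" if "t > 0" for t
    using that unfolding g_def decomp by (simp add: algebra_simps)
  have "((\<lambda>t. g t - Q ** Q) \<longlongrightarrow> 0) (at_right 0)"
  proof (rule Lim_null_comparison)
    show "\<forall>\<^sub>F t in at_right 0. norm (g t - Q ** Q) \<le> 2 * K * t"
    proof (rule eventually_at_rightI[of 0 1])
      fix t :: real assume "t \<in> {0<..<1}"
      then have t: "0 < t" "t < 1" by auto
      have "norm (g t - Q ** Q) = (2/t^2) * norm (T t)" using t by (simp add: geq)
      also have "\<dots> \<le> (2/t^2) * (t^3 * K)" using normT[of t] t by (intro mult_left_mono) auto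
      also have "\<dots> = 2 * K * t" using t by (simp add: field_simps power_def eval_nat_numeral)
      finally show "norm (g t - Q ** Q) \<le> 2 * K * t" .
    qed simp
    show "((\<lambda>t. 2 * K * t) \<longlongrightarrow> 0) (at_right 0)"
      by (auto intro!: tendsto_eq_intros)
  qed
  then have lim: "(g \<longlongrightarrow> Q ** Q) (at_right 0)" by (rule LIM_zero_cancel)
  show ?thesis
  proof (rule Lim_in_closed_set[OF S(1) _ _ lim])
    show "\<forall>\<^sub>F t in at_right 0. g t \<in> S"
      by (auto simp: eventually_at_right_less intro: gS eventually_mono[OF eventually_at_right_less])
    show "\<not> trivial_limit (at_right (0::real))" by simp
  qed
qed

lemma sum_mm_left: "(sum f A) ** (R::real^'n^'n) = sum (\<lambda>x. f x ** R) A"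
  for f :: "'a \<Rightarrow> real^'n^'n"
  by (induction A rule: infinite_finite_induct) (simp_all add: matrix_add_rdistrib')

lemma matpow_shift:
  fixes R :: "real^'n^'n"
  shows "matpow (R + d *\<^sub>R mat 1) k = (\<Sum>j\<le>k. (real (k choose j) * d^(k-j)) *\<^sub>R matpow R j)"
proof (induction k)
  case 0 then show ?case by simp
next
  case (Suc k)
  define a where "a j = real (k choose j) * d^(k-j)" for j
  have "matpow (R + d *\<^sub>R mat 1) (Suc k) = (\<Sum>j\<le>k. a j *\<^sub>R matpow R j) ** (R + d *\<^sub>R mat 1)"
    using Suc by (simp add: a_def)
  also have "\<dots> = (\<Sum>j\<le>k. a j *\<^sub>R matpow R (Suc j)) + (\<Sum>j\<le>k. (d * a j) *\<^sub>R matpow R j)"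
    by (simp add: matrix_add_ldistrib sum_mm_left scaleR_mm_left scaleR_mm_right sum.distrib scaleR_sum_right)
  finally have H1: "matpow (R + d *\<^sub>R mat 1) (Suc k) = (\<Sum>j\<le>k. a j *\<^sub>R matpow R (Suc j)) + (\<Sum>j\<le>k. (d * a j) *\<^sub>R matpow R j)" .
  have A2: "(\<Sum>j\<le>k. (d * a j) *\<^sub>R matpow R j) = d^(Suc k) *\<^sub>R mat 1 + (\<Sum>j<k. (real (k choose Suc j) * d^(k-j)) *\<^sub>R matpow R (Suc j))"
  proof -
    have "(\<Sum>j\<le>k. (d * a j) *\<^sub>R matpow R j) = (d * a 0) *\<^sub>R matpow R 0 + (\<Sum>j<k. (d * a (Suc j)) *\<^sub>R matpow R (Suc j))"
      by (rule sum.atMost_shift)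
    moreover have "(\<Sum>j<k. (d * a (Suc j)) *\<^sub>R matpow R (Suc j)) = (\<Sum>j<k. (real (k choose Suc j) * d^(k-j)) *\<^sub>R matpow R (Suc j))"
    proof (rule sum.cong[OF refl])
      fix j assume "j \<in> {..<k}"
      then have "d * d^(k - Suc j) = d^(k-j)" by (metis Suc_diff_Suc lessThan_iff power_Suc)
      then show "(d * a (Suc j)) *\<^sub>R matpow R (Suc j) = (real (k choose Suc j) * d^(k-j)) *\<^sub>R matpow R (Suc j)"
        unfolding a_def by (simp add: mult_ac)
    qed
    ultimately show ?thesis by (simp add: a_def)
  qed
  have A3: "(\<Sum>j\<le>Suc k. (real (Suc k choose j) * d^(Suc k-j)) *\<^sub>R matpow R j)
     = d^(Suc k) *\<^sub>R mat 1 + (\<Sum>j\<le>k. (real (Suc k choose Suc j) * d^(k-j)) *\<^sub>R matpow R (Suc j))"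
    by (subst sum.atMost_Suc_shift) simp
  have A4: "(\<Sum>j\<le>k. (real (Suc k choose Suc j) * d^(k-j)) *\<^sub>R matpow R (Suc j))
     = (\<Sum>j\<le>k. a j *\<^sub>R matpow R (Suc j)) + (\<Sum>j\<le>k. (real (k choose Suc j) * d^(k-j)) *\<^sub>R matpow R (Suc j))"
    unfolding sum.distrib[symmetric] by (rule sum.cong[OF refl]) (simp add: a_def scaleR_add_left[symmetric] distrib_right)
  have A5: "(\<Sum>j\<le>k. (real (k choose Suc j) * d^(k-j)) *\<^sub>R matpow R (Suc j))
     = (\<Sum>j<k. (real (k choose Suc j) * d^(k-j)) *\<^sub>R matpow R (Suc j))"
    by (simp add: lessThan_Suc_atMost[symmetric])
  show ?case unfolding H1 A2 A3 A4 A5 by (simp only: add_ac)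
qed


lemma bl_entry: "bounded_linear (\<lambda>A::real^'n^'n. A$a$b)"
  using bounded_linear_compose[OF bounded_linear_vec_nth[of b] bounded_linear_vec_nth[of a]] by simp

lemma matpow_nonneg:
  fixes R :: "real^'n^'n"
  assumes "\<And>i j. 0 \<le> R$i$j"
  shows "0 \<le> matpow R k $ i $ j"
proof (induction k arbitrary: i j)
  case 0 then show ?case by (simp add: mat_def)
next
  case (Suc k) then show ?case
    using assms by (simp add: matrix_matrix_mult_def sum_nonneg)
qed

lemma mexp_offdiag_nonneg:
  fixes Q :: "real^'n^'n"
  assumes off: "\<And>i j. i \<noteq> j \<Longrightarrow> 0 \<le> Q$i$j" and t: "0 \<le> t"
  shows "0 \<le> mexp (t *\<^sub>R Q) $ a $ b"
proof -
  define d where "d = l1 Q"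
  define R where "R = Q + d *\<^sub>R mat 1"
  have Rnn: "0 \<le> R$i$j" for i j
  proof (cases "i = j")
    case True
    then show ?thesis using entry_le_l1[of Q i i] by (simp add: R_def d_def mat_def)
  next
    case False
    then show ?thesis using off[OF False] by (simp add: R_def mat_def)
  qed
  have QR: "Q = R + (-d) *\<^sub>R mat 1" by (simp add: R_def)
  define x where "x j = E R t j $ a $ b" for j
  define y where "y m = (-d*t)^m /\<^sub>R fact m" for m
  have xnn: "0 \<le> x j" for j
    unfolding x_def E_def using matpow_nonneg[OF Rnn] t by simp
  have sx: "summable (\<lambda>j. norm (x j))"
  proof (rule summable_comparison_test[OF _ summable_norm_E[of R t]])
    show "\<exists>N. \<forall>n\<ge>N. norm (norm (x n)) \<le> norm (E R t n)"
      unfolding x_def by (auto intro!: exI[of _ 0] order_trans[OF component_le_norm_cart Finite_Cartesian_Product.norm_nth_le])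
  qed
  have sy: "summable (\<lambda>m. norm (y m))" unfolding y_def by (rule summable_norm_exp)
  have Sy: "(\<Sum>m. y m) = exp (-d*t)" unfolding y_def by (rule sums_unique[OF exp_converges, symmetric])
  have Sx: "0 \<le> (\<Sum>j. x j)" using summable_norm_cancel[OF sx] xnn by (rule suminf_nonneg)
  have trm: "E Q t k $ a $ b = (\<Sum>i\<le>k. x i * y (k - i))" for k
  proof -
    have "E Q t k $ a $ b = (t^k / fact k) * (\<Sum>j\<le>k. (real (k choose j) * (-d)^(k-j)) * matpow R j $ a $ b)"
      unfolding E_def QR matpow_shift by (simp add: sum_component)
    also have "\<dots> = (\<Sum>j\<le>k. x j * y (k - j))"
      unfolding sum_distrib_left
    proof (rule sum.cong[OF refl])
      fix j assume "j \<in> {..k}"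
      then have jk: "j \<le> k" by simp
      have pw: "(-(d*t))^m = t^m * (-d)^m" for m by (metis mult.commute mult_minus_left power_mult_distrib)
      have tk: "t^k = t^j * t^(k-j)" using jk by (simp add: power_add[symmetric])
      show "t ^ k / fact k * (real (k choose j) * (- d) ^ (k - j) * matpow R j $ a $ b) = x j * y (k - j)"
        unfolding x_def y_def E_def binomial_fact[OF jk] tk
        by (simp add: pw field_simps)
    qed
    finally show ?thesis .
  qed
  have "mexp (t *\<^sub>R Q) $ a $ b = (\<Sum>k. E Q t k $ a $ b)"
    unfolding mexp_E by (rule bounded_linear.suminf[OF bl_entry summable_E])
  also have "\<dots> = (\<Sum>j. x j) * (\<Sum>m. y m)"
    unfolding trm by (rule Cauchy_product[OF sx sy, symmetric])
  finally show ?thesis using Sx Sy by simp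
qed



lemma jordan_pow:
  fixes Q :: "real^'n^'n"
  assumes S: "subspace S" and J: "\<And>A B. A \<in> S \<Longrightarrow> B \<in> S \<Longrightarrow> A ** B + B ** A \<in> S" and Q: "Q \<in> S"
  shows "matpow Q (Suc k) \<in> S"
proof (induction k)
  case 0 then show ?case using Q by simp
next
  case (Suc k)
  define P where "P = matpow Q (Suc k)"
  have "P ** Q + Q ** P \<in> S" using J[OF Suc[folded P_def] Q] .
  moreover have "Q ** P = P ** Q" unfolding P_def by (rule matpow_comm[symmetric])
  ultimately have "2 *\<^sub>R (P ** Q) \<in> S" by (simp add: scaleR_2)
  then have "(1/2) *\<^sub>R (2 *\<^sub>R (P ** Q)) \<in> S" using S by (rule subspace_scale[rotated])
  then show ?case by (simp add: P_def)
qed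

lemma subspace_zrs: "subspace (zero_row_sum :: (real^'n^'n) set)"
  unfolding subspace_def zero_row_sum_def
  by (simp add: matrix_vector_mult_add_rdistrib scaleR_matrix_vector_assoc[symmetric])

lemma rate_add: "A \<in> rate_matrices \<Longrightarrow> B \<in> rate_matrices \<Longrightarrow> A + B \<in> rate_matrices"
  unfolding rate_matrices_def zero_row_sum_def by (simp add: matrix_vector_mult_add_rdistrib)

lemma sq_expand: "(A + B) ** (A + B) - A ** A - B ** B = A ** B + B ** A" for A B :: "real^'n^'n"
  by (simp add: matrix_add_ldistrib matrix_add_rdistrib')

lemma bilin_subspace1:
  fixes S :: "(real^'n^'n) set"
  assumes "subspace S"
  shows "subspace {B. A ** B + B ** A \<in> S}"
proof (rule subspaceI)
  show "0 \<in> {B. A ** B + B ** A \<in> S}" using assms by (simp add: subspace_0)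
next
  fix x y assume "x \<in> {B. A ** B + B ** A \<in> S}" "y \<in> {B. A ** B + B ** A \<in> S}"
  then have "(A ** x + x ** A) + (A ** y + y ** A) \<in> S" using assms by (simp add: subspace_add)
  then show "x + y \<in> {B. A ** B + B ** A \<in> S}"
    by (simp add: matrix_add_ldistrib matrix_add_rdistrib' algebra_simps)
next
  fix c x assume "x \<in> {B. A ** B + B ** A \<in> S}"
  then have "c *\<^sub>R (A ** x + x ** A) \<in> S" using assms by (simp add: subspace_scale)
  then show "c *\<^sub>R x \<in> {B. A ** B + B ** A \<in> S}"
    by (simp add: scaleR_mm_left scaleR_mm_right scaleR_add_right)
qed

theorem mainTheorem1:
  fixes M :: "(real^'n^'n) set"
  assumes "linear_markov_model M"
  shows "M = span M \<inter> rate_matrices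
         \<and> (uniformization_stable M \<longleftrightarrow> jordan_algebra (span M))"
proof -
  obtain L where L: "subspace L" "L \<subseteq> zero_row_sum" "M = L \<inter> rate_matrices"
    using assms unfolding linear_markov_model_def by blast
  define S where "S = span M"
  have SL: "S \<subseteq> L" unfolding S_def using L by (intro span_minimal) auto
  have SZ: "S \<subseteq> zero_row_sum" using SL L(2) by blast
  have part1: "M = S \<inter> rate_matrices"
    using SL L(3) span_superset[of M] unfolding S_def by blast
  have Ssub: "subspace S" unfolding S_def by simp
  have Scl: "closed S" using Ssub by (rule closed_subspace)
  have Madd: "A + B \<in> M" if "A \<in> M" "B \<in> M" for A B
    using that L by (auto simp: subspace_add rate_add)
  have MS: "A \<in> S" if "A \<in> M" for A using that span_superset[of M] unfolding S_def by blast
  have "uniformization_stable M \<longleftrightarrow> jordan_algebra S"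
  proof
    assume U: "uniformization_stable M"
    have sq: "P ** P \<in> S" if P: "P \<in> M" for P
    proof (rule sq_in[OF Scl Ssub MS[OF P]])
      fix t :: real assume "t > 0"
      then obtain Qh where "Qh \<in> M" "mexp (t *\<^sub>R P) - mat 1 = Qh"
        using U P unfolding uniformization_stable_def by fastforce
      then show "mexp (t *\<^sub>R P) - mat 1 \<in> S" using MS by simp
    qed
    have JM: "A ** B + B ** A \<in> S" if "A \<in> M" "B \<in> M" for A B
    proof -
      have "(A + B) ** (A + B) - A ** A - B ** B \<in> S"
        using sq[OF Madd[OF that]] sq[OF that(1)] sq[OF that(2)] Ssub by (intro subspace_diff) auto
      then show ?thesis by (simp only: sq_expand)
    qed
    have J1: "A ** B + B ** A \<in> S" if "A \<in> M" "B \<in> S" for A B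
      using \<open>B \<in> S\<close> unfolding S_def
    proof (rule span_induct)
      show "subspace {B. A ** B + B ** A \<in> span M}" by (rule bilin_subspace1) simp
      show "\<And>x. x \<in> M \<Longrightarrow> A ** x + x ** A \<in> span M" using JM[OF that(1)] unfolding S_def by simp
    qed
    have J2: "B ** A + A ** B \<in> S" if "A \<in> S" "B \<in> S" for A B
      using \<open>A \<in> S\<close> unfolding S_def
    proof (rule span_induct)
      show "subspace {A. B ** A + A ** B \<in> span M}" by (rule bilin_subspace1) simp
      show "\<And>x. x \<in> M \<Longrightarrow> B ** x + x ** B \<in> span M"
        using J1[OF _ that(2)] unfolding S_def by (simp add: add.commute)
    qed
    show "jordan_algebra S" unfolding jordan_algebra_def using Ssub J2 by (metis add.commute)
  next
    assume J: "jordan_algebra S"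
    show "uniformization_stable M" unfolding uniformization_stable_def
    proof (intro ballI allI impI)
      fix Q t assume Q: "Q \<in> M" and t: "(0::real) \<le> t"
      have pow: "matpow Q (Suc k) \<in> S" for k
        using J MS[OF Q] unfolding jordan_algebra_def by (intro jordan_pow) auto
      have "mexp (t *\<^sub>R Q) = (\<Sum>k. E Q t (k+1)) + (\<Sum>i<1. E Q t i)"
        unfolding mexp_E by (rule suminf_split_initial_segment[OF summable_E])
      then have eq: "mexp (t *\<^sub>R Q) - mat 1 = (\<Sum>k. E Q t (k+1))" by (simp add: E_def)
      have inS: "mexp (t *\<^sub>R Q) - mat 1 \<in> S"
        unfolding eq
      proof (rule suminf_in_closed_subspace[OF Scl Ssub])
        show "summable (\<lambda>k. E Q t (k+1))"
          using summable_E[of Q t] summable_iff_shift[of "E Q t" 1] by simp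
        show "E Q t (k+1) \<in> S" for k unfolding E_def using pow[of k] Ssub by (simp add: subspace_scale)
      qed
      have QR: "Q \<in> rate_matrices" using Q L(3) by blast
      have rate: "mexp (t *\<^sub>R Q) - mat 1 \<in> rate_matrices"
        unfolding rate_matrices_def
      proof (intro CollectI conjI allI impI)
        show "mexp (t *\<^sub>R Q) - mat 1 \<in> zero_row_sum" using inS SZ by blast
        fix i j :: 'n assume ij: "i \<noteq> j"
        have "0 \<le> mexp (t *\<^sub>R Q) $ i $ j"
          using QR t by (intro mexp_offdiag_nonneg) (auto simp: rate_matrices_def)
        then show "0 \<le> (mexp (t *\<^sub>R Q) - mat 1) $ i $ j" using ij by (simp add: mat_def)
      qed
      show "\<exists>Qh\<in>M. mexp (t *\<^sub>R Q) - mat 1 = Qh"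
        using inS rate part1 by blast
    qed
  qed
  then show ?thesis using part1 unfolding S_def by simp
qed

end
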